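(* Let $\mathcal U$ be any nonprincipal ultrafilter on $\mathbb{N}$. There exists $r\in({}^{\star}\mathbb{R}_{\mathcal F})_F$ such that $i(r)=0$ in $\mathbb{R}_{\mathcal F}^{\circ}$ and $j(r)\neq 0$ in ${}^{\star}\mathbb{R}$.
   Context: $\mathcal F$ is the Fréchet filter of cofinite subsets of $\mathbb{N}$. Henle's ring ${}^{\star}\mathbb{R}_{\mathcal F}=\mathbb{R}^{\mathbb{N}}/\mathcal F$: classes $[x]_{\mathcal F}$ of real sequences identified when equal for all but finitely many $n$, with pointwise operations and order $[x]_{\mathcal F}\le[y]_{\mathcal F}$ iff $\{n:x_n\le y_n\}\in\mathcal F$; $({}^{\star}\mathbb{R}_{\mathcal F})_F$ is its subring of finite elements ($-n\le r\le n$ for some $n\in\mathbb{N}$). ${}^{\star}\mathbb{R}=\mathbb{R}^{\mathbb{N}}/\mathcal U$ is the hyperreal field (sequences identified when they agree on a set in $\mathcal U$). With $\mathbb{R}^{\mathbb{N}}_B$ the ring of bounded real sequences and $o=\{f\in\mathbb{R}^{\mathbb{N}}:\lim_{n\to\infty}nf(n)=0\}$ (an ideal of $\mathbb{R}^{\mathbb{N}}_B$), $\mathbb{R}_{\mathcal F}^{\circ}=\mathbb{R}^{\mathbb{N}}_B/o$. The homomorphisms are $i:({}^{\star}\mathbb{R}_{\mathcal F})_F\to\mathbb{R}_{\mathcal F}^{\circ}$, $i([x]_{\mathcal F})=[x]_o$, and $j:{}^{\star}\mathbb{R}_{\mathcal F}\to{}^{\star}\mathbb{R}$, $j([x]_{\mathcal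 F})=[x]_{\mathcal U}$. *)

theory Defs
  imports Complex_Main
begin

definition Fclass :: "(nat \<Rightarrow> real) \<Rightarrow> (nat \<Rightarrow> real) set" where
  "Fclass x = {y. \<forall>\<^sub>F n in cofinite. x n = y n}"

definition starR_F :: "(nat \<Rightarrow> real) set set" where
  "starR_F = range Fclass"

definition F_le :: "(nat \<Rightarrow> real) set \<Rightarrow> (nat \<Rightarrow> real) set \<Rightarrow> bool" where
  "F_le r s \<longleftrightarrow> (\<exists>x\<in>r. \<exists>y\<in>s. \<forall>\<^sub>F n in cofinite. x n \<le> y n)"

definition starR_F_fin :: "(nat \<Rightarrow> real) set set" where
  "starR_F_fin = {r \<in> starR_F. \<exists>m::nat.
      F_le (Fclass (\<lambda>_. - real m)) r \<and> F_le r (Fclass (\<lambda>_. real m))}"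

definition o_ideal :: "(nat \<Rightarrow> real) set" where
  "o_ideal = {f. (\<lambda>n. real n * f n) \<longlonglongrightarrow> 0}"

definition oclass :: "(nat \<Rightarrow> real) \<Rightarrow> (nat \<Rightarrow> real) set" where
  "oclass x = {y. Bseq y \<and> (\<lambda>n. x n - y n) \<in> o_ideal}"

definition R_circ :: "(nat \<Rightarrow> real) set set" where
  "R_circ = oclass ` {f. Bseq f}"

definition nonprincipal_ultrafilter :: "nat filter \<Rightarrow> bool" where
  "nonprincipal_ultrafilter U \<longleftrightarrow> U \<noteq> bot \<and>
     (\<forall>P. eventually P U \<or> eventually (\<lambda>n. \<not> P n) U) \<and>
     (\<forall>m. \<not> eventually (\<lambda>n. n = m) U)"

definition Uclass :: "nat filter \<Rightarrow> (nat \<Rightarrow> real) \<Rightarrow> (nat \<Rightarrow> real) set" where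
  "Uclass U x = {y. \<forall>\<^sub>F n in U. x n = y n}"

section \<open>The homomorphisms i and j (via any representative; well defined)\<close>

definition hom_i :: "(nat \<Rightarrow> real) set \<Rightarrow> (nat \<Rightarrow> real) set" where
  "hom_i r = oclass (SOME x. x \<in> r)"

definition hom_j :: "nat filter \<Rightarrow> (nat \<Rightarrow> real) set \<Rightarrow> (nat \<Rightarrow> real) set" where
  "hom_j U r = Uclass U (SOME x. x \<in> r)"

end

theory Submission
  imports Defs "HOL-Real_Asymp.Real_Asymp"
begin

lemma fin_not_ev:
  assumes U: "nonprincipal_ultrafilter U" and S: "finite S"
  shows "\<not> eventually (\<lambda>n. n \<in> S) U"
  using S
proof (induction S rule: finite_induct)
  case empty
  then show ?case using U unfolding nonprincipal_ultrafilter_def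
    by (simp add: eventually_False)
next
  case (insert a S)
  show ?case
  proof
    assume h: "eventually (\<lambda>n. n \<in> insert a S) U"
    have "\<not> eventually (\<lambda>n. n = a) U" using U unfolding nonprincipal_ultrafilter_def by blast
    hence e1: "eventually (\<lambda>n. n \<noteq> a) U" using U unfolding nonprincipal_ultrafilter_def by blast
    have e2: "eventually (\<lambda>n. n \<notin> S) U" using insert.IH U unfolding nonprincipal_ultrafilter_def by blast
    have "eventually (\<lambda>n. False) U"
      using eventually_conj[OF h eventually_conj[OF e1 e2]] by (rule eventually_mono) auto
    thus False using U unfolding nonprincipal_ultrafilter_def by (simp add: eventually_False)
  qed
qed

lemma cof_ev:
  assumes U: "nonprincipal_ultrafilter U" and P: "eventually P cofinite"
  shows "eventually P U"
proof -
  have "finite {n. \<not> P n}" using P by (simp add: eventually_cofinite)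
  hence "\<not> eventually (\<lambda>n. n \<in> {n. \<not> P n}) U" by (rule fin_not_ev[OF U])
  thus ?thesis using U unfolding nonprincipal_ultrafilter_def by auto
qed

theorem mainTheorem6:
  fixes U :: "nat filter"
  assumes "nonprincipal_ultrafilter U"
  shows "\<exists>r \<in> starR_F_fin. hom_i r = oclass (\<lambda>_. 0) \<and> hom_j U r \<noteq> Uclass U (\<lambda>_. 0)"
proof -
  define x :: "nat \<Rightarrow> real" where "x n = 1 / (real n + 1)^2" for n
  define r where "r = Fclass x"
  have xpos: "x n > 0" for n unfolding x_def by simp
  have xle: "x n \<le> 1" for n unfolding x_def by (simp add: divide_le_eq_1 power_le_one_iff one_le_power)
  have xo: "(\<lambda>n. real n * x n) \<longlonglongrightarrow> 0" unfolding x_def by real_asymp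
  have xr: "x \<in> r" unfolding r_def Fclass_def by simp
  define y where "y = (SOME y. y \<in> r)"
  have yr: "y \<in> r" unfolding y_def using xr by (metis someI)
  hence yx: "\<forall>\<^sub>F n in cofinite. x n = y n" unfolding r_def Fclass_def by simp
  have fin: "r \<in> starR_F_fin"
    unfolding starR_F_fin_def starR_F_def F_le_def
  proof (intro CollectI conjI exI)
    show "r \<in> range Fclass" unfolding r_def by simp
    show "\<exists>xa\<in>Fclass (\<lambda>_. - real 1). \<exists>y\<in>r. \<forall>\<^sub>F n in cofinite. xa n \<le> y n"
      proof (rule bexI[of _ "\<lambda>_. -1"], rule bexI[OF _ xr])
      show "\<forall>\<^sub>F n in cofinite. - 1 \<le> x n" using xpos by (intro always_eventually) (meson less_imp_le order_trans neg_le_0_iff_le zero_le_one)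
    qed (simp add: Fclass_def)
    show "\<exists>xa\<in>r. \<exists>y\<in>Fclass (\<lambda>_. real 1). \<forall>\<^sub>F n in cofinite. xa n \<le> y n"
      proof (rule bexI[OF _ xr], rule bexI[of _ "\<lambda>_. 1"])
      show "\<forall>\<^sub>F n in cofinite. x n \<le> 1" using xle by (intro always_eventually) simp
    qed (simp add: Fclass_def)
  qed
  have yo: "(\<lambda>n. real n * y n) \<longlonglongrightarrow> 0"
  proof (rule Lim_transform_eventually[OF xo])
    show "\<forall>\<^sub>F n in sequentially. real n * x n = real n * y n"
      using yx unfolding cofinite_eq_sequentially by (rule eventually_mono) simp
  qed
  have key: "((\<lambda>n. real n * (y n - z n)) \<longlonglongrightarrow> 0) = ((\<lambda>n. real n * (0 - z n)) \<longlonglongrightarrow> 0)"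
    for z :: "nat \<Rightarrow> real"
  proof
    have eq: "(\<lambda>n. real n * (0 - z n)) = (\<lambda>n. real n * (y n - z n) - real n * y n)"
      by (auto simp: algebra_simps)
    have eq2: "(\<lambda>n. real n * (y n - z n)) = (\<lambda>n. real n * (0 - z n) + real n * y n)"
      by (auto simp: algebra_simps)
    show "(\<lambda>n. real n * (0 - z n)) \<longlonglongrightarrow> 0" if "(\<lambda>n. real n * (y n - z n)) \<longlonglongrightarrow> 0"
      using tendsto_diff[OF that yo] unfolding eq by simp
    show "(\<lambda>n. real n * (y n - z n)) \<longlonglongrightarrow> 0" if "(\<lambda>n. real n * (0 - z n)) \<longlonglongrightarrow> 0"
      using tendsto_add[OF that yo] unfolding eq2 by simp
  qed
  have i: "hom_i r = oclass (\<lambda>_. 0)"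
    unfolding hom_i_def y_def[symmetric] oclass_def o_ideal_def using key by simp
  have j: "hom_j U r \<noteq> Uclass U (\<lambda>_. 0)"
  proof
    assume h: "hom_j U r = Uclass U (\<lambda>_. 0)"
    have "y \<in> hom_j U r" unfolding hom_j_def y_def[symmetric] Uclass_def by simp
    hence e0: "\<forall>\<^sub>F n in U. 0 = y n" using h unfolding Uclass_def by simp
    have e1: "\<forall>\<^sub>F n in U. x n = y n" by (rule cof_ev[OF assms yx])
    have "\<forall>\<^sub>F n in U. False"
      using eventually_conj[OF e0 e1] by (rule eventually_mono) (metis xpos less_irrefl)
    thus False using assms unfolding nonprincipal_ultrafilter_def by (simp add: eventually_False)
  qed
  show ?thesis using fin i j by blast
qed

end
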